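(* Assume there is an algorithm $\textsc{Alg}$ that, given a graph $G=(V,E)$ with $|V|=n$ in a dynamic stream, uses $\widetilde{O}(n)$ space and outputs a spanner of $G$ with stretch $\widetilde{O}(n^{\beta})$, for some constant $\beta\in(0,1)$, with failure probability $n^{-c}$ for some constant $c$. Then, for any constant $\alpha\in(0,1)$, one can construct an algorithm that uses $\widetilde{O}(n^{1+\alpha})$ space and outputs a spanner with stretch $\widetilde{O}(n^{\beta(1-\alpha)})$ with failure probability $\widetilde{O}(n^{(2+c)\alpha-c})$.
   Context: Dynamic stream model: a fixed vertex set $V$ of $n$ vertices is known; the (unweighted, undirected) graph's edges arrive as a stream of insertions and deletions; algorithms process the stream with limited memory (space, in bits). A subgraph $K$ of $G$ is a spanner with stretch $t$ if $d_K(u,v)\le t\cdot d_G(u,v)$ for all $u,v\in V$ ($d$ = shortest-path distance). $\widetilde{O}(f)$ means $f\cdot\mathrm{polylog}(n)$. *)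

theory Defs
  imports "HOL-Probability.Probability"
begin

(* Vertex set V = {0..<n}. An (undirected) edge is a pair (u,v) with u < v < n. *)
definition edges :: "nat \<Rightarrow> (nat \<times> nat) set" where
  "edges n = {(u,v). u < v \<and> v < n}"

datatype upd = Ins "nat \<times> nat" | Del "nat \<times> nat"

fun valid_from :: "nat \<Rightarrow> (nat \<times> nat) set \<Rightarrow> upd list \<Rightarrow> bool" where
  "valid_from n S [] = True"
| "valid_from n S (Ins e # \<sigma>) = (e \<in> edges n \<and> e \<notin> S \<and> valid_from n (insert e S) \<sigma>)"
| "valid_from n S (Del e # \<sigma>) = (e \<in> S \<and> valid_from n (S - {e}) \<sigma>)"

definition valid_stream :: "nat \<Rightarrow> upd list \<Rightarrow> bool" where
  "valid_stream n \<sigma> = valid_from n {} \<sigma>"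

fun apply_upd :: "(nat \<times> nat) set \<Rightarrow> upd \<Rightarrow> (nat \<times> nat) set" where
  "apply_upd S (Ins e) = insert e S"
| "apply_upd S (Del e) = S - {e}"

definition final_graph :: "upd list \<Rightarrow> (nat \<times> nat) set" where
  "final_graph \<sigma> = foldl apply_upd {} \<sigma>"

definition adj :: "(nat \<times> nat) set \<Rightarrow> nat \<Rightarrow> nat \<Rightarrow> bool" where
  "adj E u v \<longleftrightarrow> (u, v) \<in> E \<or> (v, u) \<in> E"

definition is_walk :: "(nat \<times> nat) set \<Rightarrow> nat \<Rightarrow> nat \<Rightarrow> nat list \<Rightarrow> bool" where
  "is_walk E u v p \<longleftrightarrow> p \<noteq> [] \<and> hd p = u \<and> last p = v \<and>
     (\<forall>i. Suc i < length p \<longrightarrow> adj E (p ! i) (p ! Suc i))"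

(* shortest-path distance (number of edges); infinity if not connected *)
definition gdist :: "(nat \<times> nat) set \<Rightarrow> nat \<Rightarrow> nat \<Rightarrow> enat" where
  "gdist E u v = (INF p \<in> {p. is_walk E u v p}. enat (length p - 1))"

definition is_spanner :: "nat \<Rightarrow> (nat \<times> nat) set \<Rightarrow> (nat \<times> nat) set \<Rightarrow> real \<Rightarrow> bool" where
  "is_spanner n G K t \<longleftrightarrow> K \<subseteq> G \<and>
     (\<forall>u<n. \<forall>v<n. \<forall>m. gdist G u v = enat m \<longrightarrow>
        (\<exists>m'. gdist K u v = enat m' \<and> real m' \<le> t * real m))"

record det_alg =
  init_st :: "bool list"
  step_fn :: "upd \<Rightarrow> bool list \<Rightarrow> bool list"
  out_fn :: "bool list \<Rightarrow> (nat \<times> nat) set"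

definition run :: "det_alg \<Rightarrow> upd list \<Rightarrow> bool list" where
  "run D \<sigma> = foldl (\<lambda>s x. step_fn D x s) (init_st D) \<sigma>"

(* A randomized streaming algorithm: for each n (the known vertex set {0..<n}) a
   probability distribution over deterministic algorithms (random bits = choice of D). *)
type_synonym rand_alg = "nat \<Rightarrow> det_alg pmf"

(* space bound in bits: the memory never exceeds s bits on any valid stream
   (prefixes of valid streams are valid, so this covers all intermediate states) *)
definition space_le :: "rand_alg \<Rightarrow> nat \<Rightarrow> real \<Rightarrow> bool" where
  "space_le A n s \<longleftrightarrow> (\<forall>D \<in> set_pmf (A n). \<forall>\<sigma>. valid_stream n \<sigma> \<longrightarrow> real (length (run D \<sigma>)) \<le> s)"

definition fail_prob :: "rand_alg \<Rightarrow> nat \<Rightarrow> real \<Rightarrow> upd list \<Rightarrow> real" where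
  "fail_prob A n t \<sigma> = measure_pmf.prob (A n)
      {D. \<not> is_spanner n (final_graph \<sigma>) (out_fn D (run D \<sigma>)) t}"

definition softO :: "(nat \<Rightarrow> real) \<Rightarrow> (nat \<Rightarrow> real) set" where
  "softO g = {f. \<exists>C k. \<forall>\<^sub>F n in sequentially. \<bar>f n\<bar> \<le> C * g n * (ln (real n)) ^ k}"

end

theory Submission
  imports Defs
begin


definition enc :: "bool list list \<Rightarrow> bool list" where
  "enc L = concat (map (\<lambda>x. concat (map (\<lambda>b. [True, b]) x) @ [False]) L)"

fun dec_aux :: "bool list \<Rightarrow> bool list \<Rightarrow> bool list list" where
  "dec_aux acc [] = []"
| "dec_aux acc (False # r) = rev acc # dec_aux [] r"
| "dec_aux acc (True # b # r) = dec_aux (b # acc) r"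
| "dec_aux acc [True] = []"

definition dec :: "bool list \<Rightarrow> bool list list" where "dec s = dec_aux [] s"

lemma dec_aux_one: "dec_aux acc (concat (map (\<lambda>b. [True, b]) x) @ False # r) = (rev acc @ x) # dec_aux [] r"
  by (induction x arbitrary: acc) auto

lemma dec_enc[simp]: "dec (enc L) = L"
proof (induction L)
  case Nil then show ?case by (simp add: dec_def enc_def)
next
  case (Cons x L)
  then show ?case using dec_aux_one[of "[]" x "enc L"] by (simp add: dec_def enc_def)
qed

lemma length_enc: "length (enc L) = (\<Sum>x\<leftarrow>L. 2 * length x + 1)"
proof -
  have "length (concat (map (\<lambda>b. [True, b]) x)) = 2 * length x" for x :: "bool list"
    by (induction x) auto
  then show ?thesis unfolding enc_def by (induction L) auto
qed

lemma is_walk_single[simp]: "is_walk E u v [x] \<longleftrightarrow> u = x \<and> v = x"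
  unfolding is_walk_def by auto

lemma is_walk_Cons2: "is_walk E u v (x # y # p) \<longleftrightarrow> x = u \<and> adj E u y \<and> is_walk E y v (y # p)"
proof
  assume h: "is_walk E u v (x # y # p)"
  then have "adj E u y" unfolding is_walk_def by (metis One_nat_def length_Cons list.sel(1) nth_Cons_0 nth_Cons_Suc zero_less_Suc Suc_less_eq)
  moreover have "is_walk E y v (y # p)" using h unfolding is_walk_def
    by auto
  ultimately show "x = u \<and> adj E u y \<and> is_walk E y v (y # p)" using h unfolding is_walk_def by auto
next
  assume h: "x = u \<and> adj E u y \<and> is_walk E y v (y # p)"
  show "is_walk E u v (x # y # p)" unfolding is_walk_def
  proof (intro conjI allI impI)
    fix i assume "Suc i < length (x # y # p)"
    then show "adj E ((x # y # p) ! i) ((x # y # p) ! Suc i)"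
      using h unfolding is_walk_def by (cases i) auto
  qed (use h in \<open>auto simp: is_walk_def\<close>)
qed

lemma is_walk_append:
  "is_walk E u w q1 \<Longrightarrow> is_walk E w v q2 \<Longrightarrow> is_walk E u v (q1 @ tl q2) \<and> length (q1 @ tl q2) - 1 = (length q1 - 1) + (length q2 - 1)"
proof (induction q1 arbitrary: u)
  case Nil then show ?case by (simp add: is_walk_def)
next
  case (Cons x q1)
  show ?case
  proof (cases q1)
    case Nil
    then have "x = u" "w = u" using Cons by auto
    moreover have "q2 \<noteq> []" "hd q2 = w" using Cons.prems(2) by (auto simp: is_walk_def)
    ultimately show ?thesis using Cons Nil by (cases q2) auto
  next
    case (Cons y q1')
    then have "x = u" "adj E u y" "is_walk E y w q1" using Cons.prems(1) is_walk_Cons2 by auto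
    with Cons.IH[of y] Cons.prems(2) have "is_walk E y v (q1 @ tl q2)"
      and l: "length (q1 @ tl q2) - 1 = (length q1 - 1) + (length q2 - 1)" by auto
    then show ?thesis using \<open>x = u\<close> \<open>adj E u y\<close> Cons is_walk_Cons2 l by auto
  qed
qed

lemma gdist_le: "is_walk E u v p \<Longrightarrow> gdist E u v \<le> enat (length p - 1)"
  unfolding gdist_def by (rule INF_lower) auto

lemma gdist_enat: "gdist E u v = enat m \<Longrightarrow> \<exists>p. is_walk E u v p \<and> length p - 1 = m"
proof -
  assume h: "gdist E u v = enat m"
  let ?A = "(\<lambda>p. enat (length p - 1)) ` {p. is_walk E u v p}"
  have "?A \<noteq> {}"
  proof
    assume "?A = {}"
    then have "Inf ?A = (\<top>::enat)" by simp
    then show False using h unfolding gdist_def top_enat_def by simp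
  qed
  then have "Inf ?A \<in> ?A" unfolding Inf_enat_def by (auto intro: LeastI)
  then obtain p where "is_walk E u v p" "Inf ?A = enat (length p - 1)" by auto
  moreover have "Inf ?A = enat m" using h unfolding gdist_def by simp
  ultimately show ?thesis by auto
qed

lemma walk_map:
  assumes "is_walk K a c p"
  shows "is_walk (map_prod g g ` K) (g a) (g c) (map g p)"
  using assms unfolding is_walk_def adj_def by (auto simp: hd_map last_map)

lemma gdist_one:
  assumes "(x, y) \<in> E \<or> (y, x) \<in> E" "x \<noteq> y"
  shows "gdist E x y = enat 1"
proof (rule antisym)
  have "is_walk E x y [x, y]" using assms by (auto simp: is_walk_Cons2 adj_def)
  then show "gdist E x y \<le> enat 1" using gdist_le by fastforce
  show "enat 1 \<le> gdist E x y" unfolding gdist_def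
  proof (rule INF_greatest)
    fix p assume "p \<in> {p. is_walk E x y p}"
    then have "p \<noteq> []" "hd p = x" "last p = y" by (auto simp: is_walk_def)
    then have "length p \<ge> 2" using assms(2) by (cases p; cases "tl p") auto
    then show "enat 1 \<le> enat (length p - 1)" by simp
  qed
qed



fun upd_edge :: "upd \<Rightarrow> nat \<times> nat" where
  "upd_edge (Ins e) = e" | "upd_edge (Del e) = e"

fun mupd :: "(nat \<times> nat \<Rightarrow> nat \<times> nat) \<Rightarrow> upd \<Rightarrow> upd" where
  "mupd h (Ins e) = Ins (h e)" | "mupd h (Del e) = Del (h e)"

definition sub :: "nat set \<Rightarrow> (nat \<Rightarrow> nat) \<Rightarrow> upd list \<Rightarrow> upd list" where
  "sub W f \<sigma> = map (mupd (map_prod f f)) (filter (\<lambda>x. upd_edge x \<in> W \<times> W) \<sigma>)"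

lemma sub_Cons: "sub W f (x # \<sigma>) = (if upd_edge x \<in> W \<times> W then [mupd (map_prod f f) x] else []) @ sub W f \<sigma>"
  by (simp add: sub_def)

lemma inj_pairs: "inj_on f W \<Longrightarrow> inj_on (map_prod f f) (W \<times> W)"
  by (auto simp: inj_on_def)

lemma valid_sub:
  assumes mono: "\<And>u v. u \<in> W \<Longrightarrow> v \<in> W \<Longrightarrow> u < v \<Longrightarrow> f u < f v"
    and rng: "\<And>u. u \<in> W \<Longrightarrow> f u < m"
  shows "valid_from n S \<sigma> \<Longrightarrow> valid_from m (map_prod f f ` (S \<inter> W \<times> W)) (sub W f \<sigma>)"
proof (induction \<sigma> arbitrary: S)
  case Nil then show ?case by (simp add: sub_def)
next
  case (Cons x \<sigma>)
  have inj: "inj_on f W" unfolding inj_on_def by (metis linorder_neqE_nat mono less_irrefl)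
  then have inj2: "inj_on (map_prod f f) (W \<times> W)" by (rule inj_pairs)
  show ?case
  proof (cases x)
    case (Ins e)
    obtain a b where e: "e = (a, b)" by force
    have h: "e \<in> edges n" "e \<notin> S" "valid_from n (insert e S) \<sigma>" using Cons.prems Ins by auto
    show ?thesis
    proof (cases "e \<in> W \<times> W")
      case True
      have IH: "valid_from m (map_prod f f ` (insert e S \<inter> W \<times> W)) (sub W f \<sigma>)" using Cons.IH h(3) .
      have eq: "insert e S \<inter> W \<times> W = insert e (S \<inter> W \<times> W)" using True by auto
      have "map_prod f f e \<in> edges m" using True h(1) mono rng e by (auto simp: edges_def)
      moreover have "map_prod f f e \<notin> map_prod f f ` (S \<inter> W \<times> W)"
        using inj_on_image_mem_iff[OF inj2, of e "S \<inter> W \<times> W"] True h(2) by auto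
      ultimately show ?thesis using IH eq True Ins by (simp add: sub_Cons)
    next
      case False
      have "insert e S \<inter> W \<times> W = S \<inter> W \<times> W" using False by auto
      then show ?thesis using Cons.IH[OF h(3)] False Ins by (simp add: sub_Cons)
    qed
  next
    case (Del e)
    have h: "e \<in> S" "valid_from n (S - {e}) \<sigma>" using Cons.prems Del by auto
    show ?thesis
    proof (cases "e \<in> W \<times> W")
      case True
      have IH: "valid_from m (map_prod f f ` ((S - {e}) \<inter> W \<times> W)) (sub W f \<sigma>)" using Cons.IH h(2) .
      have "map_prod f f ` ((S - {e}) \<inter> W \<times> W) = map_prod f f ` (S \<inter> W \<times> W) - {map_prod f f e}"
        using inj2 True by (auto simp: inj_on_def)
      then show ?thesis using IH True Del h(1) by (simp add: sub_Cons)
    next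
      case False
      have "(S - {e}) \<inter> W \<times> W = S \<inter> W \<times> W" using False by auto
      then show ?thesis using Cons.IH[OF h(2)] False Del by (simp add: sub_Cons)
    qed
  qed
qed

lemma final_sub:
  assumes inj: "inj_on f W"
  shows "foldl apply_upd (map_prod f f ` (S \<inter> W \<times> W)) (sub W f \<sigma>) = map_prod f f ` (foldl apply_upd S \<sigma> \<inter> W \<times> W)"
proof (induction \<sigma> arbitrary: S)
  case Nil then show ?case by (simp add: sub_def)
next
  case (Cons x \<sigma>)
  have inj2: "inj_on (map_prod f f) (W \<times> W)" using inj by (rule inj_pairs)
  show ?case
  proof (cases x)
    case (Ins e)
    show ?thesis
    proof (cases "e \<in> W \<times> W")
      case True
      have eq: "insert e S \<inter> W \<times> W = insert e (S \<inter> W \<times> W)" using True by auto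
      show ?thesis using Cons.IH[of "insert e S"] True Ins eq by (simp add: sub_Cons)
    next
      case False
      have "insert e S \<inter> W \<times> W = S \<inter> W \<times> W" using False by auto
      then show ?thesis using Cons.IH[of "insert e S"] False Ins by (simp add: sub_Cons)
    qed
  next
    case (Del e)
    show ?thesis
    proof (cases "e \<in> W \<times> W")
      case True
      have "map_prod f f ` ((S - {e}) \<inter> W \<times> W) = map_prod f f ` (S \<inter> W \<times> W) - {map_prod f f e}"
        using inj2 True by (auto simp: inj_on_def)
      then show ?thesis using Cons.IH[of "S - {e}"] True Del by (simp add: sub_Cons)
    next
      case False
      have "(S - {e}) \<inter> W \<times> W = S \<inter> W \<times> W" using False by auto
      then show ?thesis using Cons.IH[of "S - {e}"] False Del by (simp add: sub_Cons)
    qed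
  qed
qed

lemma final_graph_sub: "inj_on f W \<Longrightarrow> final_graph (sub W f \<sigma>) = map_prod f f ` (final_graph \<sigma> \<inter> W \<times> W)"
  using final_sub[of f W "{}" \<sigma>] by (simp add: final_graph_def)

lemma valid_stream_sub:
  assumes "\<And>u v. u \<in> W \<Longrightarrow> v \<in> W \<Longrightarrow> u < v \<Longrightarrow> f u < f v"
    and "\<And>u. u \<in> W \<Longrightarrow> f u < m" and "valid_stream n \<sigma>"
  shows "valid_stream m (sub W f \<sigma>)"
  using valid_sub[OF assms(1,2), where n=n and S="{}" and \<sigma>=\<sigma>] assms(3) by (simp add: valid_stream_def)



definition comb :: "('k \<Rightarrow> nat set) \<Rightarrow> ('k \<Rightarrow> nat \<Rightarrow> nat) \<Rightarrow> ('k \<Rightarrow> nat \<Rightarrow> nat) \<Rightarrow> 'k list \<Rightarrow> det_alg \<Rightarrow> det_alg" where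
  "comb W f g prs D = \<lparr>init_st = enc (map (\<lambda>_. init_st D) prs),
     step_fn = (\<lambda>x s. enc (map2 (\<lambda>k st. if upd_edge x \<in> W k \<times> W k
                   then step_fn D (mupd (map_prod (f k) (f k)) x) st else st) prs (dec s))),
     out_fn = (\<lambda>s. \<Union> ((\<lambda>(k, st). map_prod (g k) (g k) ` out_fn D st) ` set (zip prs (dec s))))\<rparr>"

lemma map2_map: "map2 F xs (map h xs) = map (\<lambda>x. F x (h x)) xs"
  by (induction xs) auto

lemma run_comb_gen:
  "foldl (\<lambda>s x. step_fn (comb W f g prs D) x s) (enc (map h prs)) \<sigma> =
   enc (map (\<lambda>k. foldl (\<lambda>s x. step_fn D x s) (h k) (sub (W k) (f k) \<sigma>)) prs)"
proof (induction \<sigma> arbitrary: h)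
  case Nil then show ?case by (simp add: sub_def)
next
  case (Cons x \<sigma>)
  have "step_fn (comb W f g prs D) x (enc (map h prs)) =
    enc (map (\<lambda>k. if upd_edge x \<in> W k \<times> W k then step_fn D (mupd (map_prod (f k) (f k)) x) (h k) else h k) prs)"
    by (simp add: comb_def map2_map)
  then have "foldl (\<lambda>s x. step_fn (comb W f g prs D) x s) (enc (map h prs)) (x # \<sigma>) =
    enc (map (\<lambda>k. foldl (\<lambda>s x. step_fn D x s) (if upd_edge x \<in> W k \<times> W k then step_fn D (mupd (map_prod (f k) (f k)) x) (h k) else h k) (sub (W k) (f k) \<sigma>)) prs)"
    using Cons.IH by simp
  then show ?case by (auto intro!: arg_cong[where f=enc] map_cong simp: sub_Cons)
qed

lemma run_comb: "run (comb W f g prs D) \<sigma> = enc (map (\<lambda>k. run D (sub (W k) (f k) \<sigma>)) prs)"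
  using run_comb_gen[of W f g prs D "\<lambda>_. init_st D" \<sigma>] unfolding run_def by (simp add: comb_def)

lemma zip_map: "zip xs (map h xs) = map (\<lambda>x. (x, h x)) xs"
  by (induction xs) auto

lemma out_comb: "out_fn (comb W f g prs D) (run (comb W f g prs D) \<sigma>) =
   (\<Union>k\<in>set prs. map_prod (g k) (g k) ` out_fn D (run D (sub (W k) (f k) \<sigma>)))"
  unfolding run_comb by (auto simp: comb_def zip_map)

lemma length_run_comb: "length (run (comb W f g prs D) \<sigma>) = (\<Sum>k\<leftarrow>prs. 2 * length (run D (sub (W k) (f k) \<sigma>)) + 1)"
  unfolding run_comb length_enc by (simp add: comp_def)

lemma walk_mono: "is_walk K1 a b p \<Longrightarrow> K1 \<subseteq> K2 \<Longrightarrow> is_walk K2 a b p"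
  unfolding is_walk_def adj_def by blast

lemma walk_path:
  assumes edge: "\<And>a b. adj G a b \<Longrightarrow> \<exists>q. is_walk K a b q \<and> real (length q - 1) \<le> t"
  shows "is_walk G u v p \<Longrightarrow> \<exists>q. is_walk K u v q \<and> real (length q - 1) \<le> t * real (length p - 1)"
proof (induction p arbitrary: u)
  case Nil then show ?case by (simp add: is_walk_def)
next
  case (Cons x p)
  show ?case
  proof (cases p)
    case Nil
    then show ?thesis using Cons.prems by (intro exI[of _ "[u]"]) auto
  next
    case (Cons y p')
    then have h: "x = u" "adj G u y" "is_walk G y v p" using Cons.prems is_walk_Cons2 by auto
    obtain q1 where q1: "is_walk K u y q1" "real (length q1 - 1) \<le> t" using edge h(2) by blast
    obtain q2 where q2: "is_walk K y v q2" "real (length q2 - 1) \<le> t * real (length p - 1)"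
      using Cons.IH h(3) by blast
    have c: "is_walk K u v (q1 @ tl q2)" "length (q1 @ tl q2) - 1 = (length q1 - 1) + (length q2 - 1)"
      using is_walk_append[OF q1(1) q2(1)] by auto
    have "real (length (q1 @ tl q2) - 1) \<le> t + t * real (length p - 1)" using c(2) q1(2) q2(2) by simp
    also have "\<dots> = t * real (length (x # p) - 1)" using Cons by (simp add: algebra_simps)
    finally show ?thesis using c(1) by blast
  qed
qed

lemma union_spanner:
  fixes W :: "'k \<Rightarrow> nat set" and f g :: "'k \<Rightarrow> nat \<Rightarrow> nat"
  assumes mono: "\<And>k u v. k \<in> set prs \<Longrightarrow> u \<in> W k \<Longrightarrow> v \<in> W k \<Longrightarrow> u < v \<Longrightarrow> f k u < f k v"
    and rng: "\<And>k u. k \<in> set prs \<Longrightarrow> u \<in> W k \<Longrightarrow> f k u < m"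
    and inv: "\<And>k u. k \<in> set prs \<Longrightarrow> u \<in> W k \<Longrightarrow> g k (f k u) = u"
    and cover: "\<And>a b. (a, b) \<in> G \<Longrightarrow> \<exists>k\<in>set prs. a \<in> W k \<and> b \<in> W k"
    and Gsub: "G \<subseteq> edges n"
    and sp: "\<And>k. k \<in> set prs \<Longrightarrow> is_spanner m (map_prod (f k) (f k) ` (G \<inter> W k \<times> W k)) (KK k) t"
  shows "is_spanner n G (\<Union>k\<in>set prs. map_prod (g k) (g k) ` KK k) t"
proof -
  let ?K = "\<Union>k\<in>set prs. map_prod (g k) (g k) ` KK k"
  have sub: "?K \<subseteq> G"
  proof
    fix e assume "e \<in> ?K"
    then obtain k e' where k: "k \<in> set prs" "e' \<in> KK k" "e = map_prod (g k) (g k) e'" by auto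
    then have "e' \<in> map_prod (f k) (f k) ` (G \<inter> W k \<times> W k)" using sp[OF k(1)] unfolding is_spanner_def by auto
    then obtain a b where "(a, b) \<in> G" "a \<in> W k" "b \<in> W k" "e' = (f k a, f k b)" by auto
    then show "e \<in> G" using k inv by auto
  qed
  have edge1: "\<exists>q. is_walk ?K a b q \<and> real (length q - 1) \<le> t" if ab0: "(a, b) \<in> G \<or> (b, a) \<in> G" for a b
  proof -
    obtain a0 b0 where ab: "(a0, b0) \<in> G" "(a = a0 \<and> b = b0) \<or> (a = b0 \<and> b = a0)" using ab0 by auto
    obtain k where k: "k \<in> set prs" "a0 \<in> W k" "b0 \<in> W k" using cover[OF ab(1)] by auto
    have "a0 < b0" using ab(1) Gsub by (auto simp: edges_def)
    then have ne: "f k a0 \<noteq> f k b0" using mono[OF k] by force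
    let ?G' = "map_prod (f k) (f k) ` (G \<inter> W k \<times> W k)"
    have inG': "(f k a0, f k b0) \<in> ?G'" using ab(1) k by auto
    have ia: "a \<in> W k" "b \<in> W k" using ab(2) k by auto
    have "(f k a, f k b) \<in> ?G' \<or> (f k b, f k a) \<in> ?G'" using ab(2) inG' by auto
    moreover have "f k a \<noteq> f k b" using ab(2) ne by auto
    ultimately have "gdist ?G' (f k a) (f k b) = enat 1" by (rule gdist_one)
    moreover have "f k a < m" "f k b < m" using rng k(1) ia by auto
    ultimately obtain m' where m': "gdist (KK k) (f k a) (f k b) = enat m'" "real m' \<le> t * real 1"
      using sp[OF k(1)] unfolding is_spanner_def by blast
    obtain q where q: "is_walk (KK k) (f k a) (f k b) q" "length q - 1 = m'" using gdist_enat[OF m'(1)] by blast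
    have "is_walk (map_prod (g k) (g k) ` KK k) a b (map (g k) q)"
      using walk_map[OF q(1), of "g k"] inv k(1) ia by simp
    moreover have "map_prod (g k) (g k) ` KK k \<subseteq> ?K" using k(1) by auto
    ultimately have "is_walk ?K a b (map (g k) q)"
      by (rule walk_mono)
    then show ?thesis using q(2) m'(2) by (intro exI[of _ "map (g k) q"]) auto
  qed
  have path: "\<exists>q. is_walk ?K u v q \<and> real (length q - 1) \<le> t * real (length p - 1)" if "is_walk G u v p" for u v p
    by (rule walk_path[OF _ that]) (use edge1 in \<open>auto simp: adj_def\<close>)
  show ?thesis unfolding is_spanner_def
  proof (intro conjI sub allI impI)
    fix u v M assume "u < n" "v < n" "gdist G u v = enat M"
    then obtain p where p: "is_walk G u v p" "length p - 1 = M" using gdist_enat by blast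
    obtain q where q: "is_walk ?K u v q" "real (length q - 1) \<le> t * real M" using path[OF p(1)] p(2) by auto
    have "gdist ?K u v \<le> enat (length q - 1)" using gdist_le[OF q(1)] .
    then obtain m' where "gdist ?K u v = enat m'" "m' \<le> length q - 1"
      by (cases "gdist ?K u v") auto
    then show "\<exists>m'. gdist ?K u v = enat m' \<and> real m' \<le> t * real M" using q(2)
      by (intro exI[of _ m']) (auto intro: order_trans[of _ "real (length q - 1)"])
  qed
qed



definition Wv :: "nat \<Rightarrow> nat \<times> nat \<Rightarrow> nat set" where
  "Wv b k = {u. u div b = fst k \<or> u div b = snd k}"
definition fv :: "nat \<Rightarrow> nat \<times> nat \<Rightarrow> nat \<Rightarrow> nat" where
  "fv b k u = (if u div b = fst k then u mod b else b + u mod b)"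
definition gv :: "nat \<Rightarrow> nat \<times> nat \<Rightarrow> nat \<Rightarrow> nat" where
  "gv b k x = (if x < b then fst k * b + x else snd k * b + (x - b))"
definition prs :: "nat \<Rightarrow> (nat \<times> nat) list" where
  "prs p = filter (\<lambda>k. fst k \<le> snd k) (List.product [0..<p] [0..<p])"

lemma fv_mono:
  assumes "0 < b" "fst k \<le> snd k" "u \<in> Wv b k" "v \<in> Wv b k" "u < v"
  shows "fv b k u < fv b k v"
proof -
  have d: "u div b \<le> v div b" using assms(5) by (simp add: div_le_mono)
  show ?thesis
  proof (cases "u div b = v div b")
    case True
    have "u mod b < v mod b"
      using True assms(5) by (metis div_mult_mod_eq add_less_cancel_left)
    then show ?thesis using True by (simp add: fv_def)
  next
    case False
    then have "u div b = fst k" "v div b = snd k" "fst k \<noteq> snd k" using assms(2-4) d unfolding Wv_def by auto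
    moreover have "u mod b < b" using assms(1) by simp
    ultimately show ?thesis by (simp add: fv_def)
  qed
qed

lemma fv_rng: "0 < b \<Longrightarrow> fv b k u < 2 * b"
proof -
  assume "0 < b"
  then have "u mod b < b" by simp
  then show ?thesis by (simp add: fv_def)
qed

lemma gv_fv: "0 < b \<Longrightarrow> u \<in> Wv b k \<Longrightarrow> gv b k (fv b k u) = u"
proof -
  assume b: "0 < b" and u: "u \<in> Wv b k"
  have e: "u div b * b + u mod b = u" by (rule div_mult_mod_eq)
  have m: "u mod b < b" using b by simp
  show ?thesis
  proof (cases "u div b = fst k")
    case True then show ?thesis using e m by (simp add: gv_def fv_def)
  next
    case False then have "u div b = snd k" using u by (simp add: Wv_def)
    then show ?thesis using e m False by (simp add: gv_def fv_def)
  qed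
qed

lemma prs_cover:
  assumes "0 < b" "(u, v) \<in> edges n" "n div b < p"
  shows "\<exists>k\<in>set (prs p). u \<in> Wv b k \<and> v \<in> Wv b k"
proof -
  have "u div b \<le> v div b" "v div b \<le> n div b" using assms(2) by (auto simp: edges_def div_le_mono)
  then show ?thesis using assms(3) by (intro bexI[of _ "(u div b, v div b)"]) (auto simp: Wv_def prs_def)
qed

lemma length_prs: "length (prs p) \<le> p * p"
  unfolding prs_def by (metis length_filter_le length_product length_upt minus_nat.diff_0)

lemma final_edges: "valid_from n S \<sigma> \<Longrightarrow> S \<subseteq> edges n \<Longrightarrow> foldl apply_upd S \<sigma> \<subseteq> edges n"
proof (induction \<sigma> arbitrary: S)
  case (Cons x \<sigma>) then show ?case by (cases x) auto
qed simp

lemma final_graph_edges: "valid_stream n \<sigma> \<Longrightarrow> final_graph \<sigma> \<subseteq> edges n"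
  using final_edges[of n "{}" \<sigma>] by (simp add: valid_stream_def final_graph_def)

lemma sum_list_bound:
  "(\<And>k. k \<in> set xs \<Longrightarrow> real (F k) \<le> B) \<Longrightarrow> real (\<Sum>k\<leftarrow>xs. 2 * F k + 1) \<le> real (length xs) * (2 * B + 1)"
proof (induction xs)
  case (Cons a xs)
  have "real (F a) \<le> B" using Cons.prems by simp
  moreover have "real (\<Sum>k\<leftarrow>xs. 2 * F k + 1) \<le> real (length xs) * (2 * B + 1)" using Cons by simp
  ultimately show ?case by (simp add: algebra_simps)
qed simp



definition bb :: "real \<Rightarrow> nat \<Rightarrow> nat" where
  "bb \<alpha> n = max 1 (nat \<lceil>real n powr (1 - \<alpha>)\<rceil>)"

lemma bb_pos: "0 < bb \<alpha> n" by (simp add: bb_def)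

lemma bb_lower: "real n powr (1 - \<alpha>) \<le> real (bb \<alpha> n)"
proof -
  have "real n powr (1 - \<alpha>) \<le> real (nat \<lceil>real n powr (1 - \<alpha>)\<rceil>)" by (simp add: real_nat_ceiling_ge)
  also have "\<dots> \<le> real (bb \<alpha> n)" by (simp add: bb_def)
  finally show ?thesis .
qed

lemma bb_upper:
  assumes "\<alpha> < 1" "1 \<le> n"
  shows "real (bb \<alpha> n) \<le> 2 * real n powr (1 - \<alpha>)"
proof -
  have x1: "1 \<le> real n powr (1 - \<alpha>)" using assms by (simp add: ge_one_powr_ge_zero)
  have "real (nat \<lceil>real n powr (1 - \<alpha>)\<rceil>) \<le> real n powr (1 - \<alpha>) + 1"
    using x1 by (simp add: of_nat_nat)
  then have "real (nat \<lceil>real n powr (1 - \<alpha>)\<rceil>) \<le> 2 * real n powr (1 - \<alpha>)" using x1 by linarith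
  moreover have "1 \<le> 2 * real n powr (1 - \<alpha>)" using x1 by linarith
  ultimately show ?thesis unfolding bb_def by (simp add: of_nat_max)
qed

lemma pp_upper:
  assumes "0 < \<alpha>" "\<alpha> < 1" "1 \<le> n"
  shows "real (n div bb \<alpha> n + 1) \<le> 2 * real n powr \<alpha>"
proof -
  have np: "0 < real n" using assms by simp
  have x0: "0 < real n powr (1 - \<alpha>)" using np by simp
  have "real (n div bb \<alpha> n) \<le> real n / real (bb \<alpha> n)" by (rule of_nat_div_le_of_nat)
  also have "\<dots> \<le> real n / real n powr (1 - \<alpha>)"
    using bb_lower[of n \<alpha>] x0 np bb_pos[of \<alpha> n] by (intro divide_left_mono) auto
  also have "\<dots> = real n powr \<alpha>"
    using np by (simp add: powr_diff)
  finally have a: "real (n div bb \<alpha> n) \<le> real n powr \<alpha>" .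
  have "1 \<le> real n powr \<alpha>" using assms by (simp add: ge_one_powr_ge_zero)
  then show ?thesis using a by simp
qed

lemma bb_large: "eventually (\<lambda>n. M \<le> real (2 * bb \<alpha> n)) sequentially" if "\<alpha> < 1"
proof -
  define M' where "M' = max M 1"
  have "eventually (\<lambda>n. M' powr (1 / (1 - \<alpha>)) \<le> real n) sequentially"
    by (rule eventually_sequentiallyI[of "nat \<lceil>M' powr (1 / (1 - \<alpha>))\<rceil>"]) linarith
  then have "eventually (\<lambda>n. M \<le> real n powr (1 - \<alpha>)) sequentially"
  proof (rule eventually_mono)
    fix n assume h: "M' powr (1 / (1 - \<alpha>)) \<le> real n"
    have "M' = (M' powr (1 / (1 - \<alpha>))) powr (1 - \<alpha>)" using that by (simp add: powr_powr M'_def)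
    also have "\<dots> \<le> real n powr (1 - \<alpha>)" using h that by (intro powr_mono2) auto
    finally show "M \<le> real n powr (1 - \<alpha>)" unfolding M'_def by linarith
  qed
  then show ?thesis
  proof (rule eventually_mono)
    fix n assume "M \<le> real n powr (1 - \<alpha>)"
    then show "M \<le> real (2 * bb \<alpha> n)" using bb_lower[of n \<alpha>] by simp
  qed
qed

lemma ln_bb:
  assumes "0 < \<alpha>" "\<alpha> < 1" "4 \<le> n"
  shows "0 \<le> ln (real (2 * bb \<alpha> n)) \<and> ln (real (2 * bb \<alpha> n)) \<le> 2 * ln (real n)"
proof -
  have "real n powr (1 - \<alpha>) \<le> real n powr 1" using assms by (intro powr_mono) auto
  then have "real (2 * bb \<alpha> n) \<le> 4 * real n" using bb_upper[of \<alpha> n] assms by simp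
  moreover have "1 \<le> real (2 * bb \<alpha> n)" using bb_pos[of \<alpha> n] by linarith
  ultimately have "ln (real (2 * bb \<alpha> n)) \<le> ln (4 * real n)" by simp
  also have "\<dots> = ln 4 + ln (real n)" using assms by (simp add: ln_mult)
  also have "\<dots> \<le> 2 * ln (real n)" using assms by simp
  finally show ?thesis using bb_pos[of \<alpha> n] by simp
qed



lemma softO_t:
  assumes a: "0 < \<alpha>" "\<alpha> < 1" and b: "0 < \<beta>" and t: "t \<in> softO (\<lambda>n. real n powr \<beta>)"
  shows "(\<lambda>n. t (2 * bb \<alpha> n)) \<in> softO (\<lambda>n. real n powr (\<beta> * (1 - \<alpha>)))"
proof -
  obtain C k where ev: "\<forall>\<^sub>F m in sequentially. \<bar>t m\<bar> \<le> C * real m powr \<beta> * ln (real m) ^ k"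
    using t unfolding softO_def by auto
  then obtain M0 where M0: "\<And>m. M0 \<le> m \<Longrightarrow> \<bar>t m\<bar> \<le> C * real m powr \<beta> * ln (real m) ^ k"
    unfolding eventually_sequentially by auto
  have ev2: "\<forall>\<^sub>F n in sequentially. 4 \<le> n \<and> real M0 \<le> real (2 * bb \<alpha> n)"
    using eventually_conj[OF eventually_ge_at_top[of 4] bb_large[OF a(2), of "real M0"]] .
  show ?thesis unfolding softO_def
  proof (intro CollectI exI[of _ "\<bar>C\<bar> * 4 powr \<beta> * 2 ^ k"] exI[of _ k], rule eventually_mono[OF ev2])
    fix n assume h: "4 \<le> n \<and> real M0 \<le> real (2 * bb \<alpha> n)"
    define m where "m = 2 * bb \<alpha> n"
    have mM: "M0 \<le> m" using h m_def by simp
    have L: "0 \<le> ln (real m)" "ln (real m) \<le> 2 * ln (real n)" using ln_bb[OF a, of n] h m_def by auto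
    have mu: "real m \<le> 4 * real n powr (1 - \<alpha>)" using bb_upper[OF a(2), of n] h m_def by simp
    have mpos: "0 < real m" using bb_pos[of \<alpha> n] m_def by simp
    have "\<bar>t m\<bar> \<le> C * real m powr \<beta> * ln (real m) ^ k" using M0[OF mM] .
    also have "\<dots> \<le> \<bar>C\<bar> * (real m powr \<beta> * ln (real m) ^ k)"
      using L(1) by (simp add: mult.assoc abs_mult_pos mult_right_mono)
    also have "\<dots> \<le> \<bar>C\<bar> * ((4 * real n powr (1 - \<alpha>)) powr \<beta> * (2 * ln (real n)) ^ k)"
      using L mu mpos b by (intro mult_left_mono mult_mono powr_mono2 power_mono) auto
    also have "(4 * real n powr (1 - \<alpha>)) powr \<beta> = 4 powr \<beta> * real n powr (\<beta> * (1 - \<alpha>))"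
      by (simp add: powr_mult powr_powr mult.commute)
    finally show "\<bar>t (2 * bb \<alpha> n)\<bar> \<le> \<bar>C\<bar> * 4 powr \<beta> * 2 ^ k * real n powr (\<beta> * (1 - \<alpha>)) * ln (real n) ^ k"
      unfolding m_def by (simp add: power_mult_distrib algebra_simps)
  qed
qed

lemma softO_delta:
  assumes a: "0 < \<alpha>" "\<alpha> < 1" and c: "0 < c"
  shows "(\<lambda>n. if M1 \<le> 2 * bb \<alpha> n then real (length (prs (n div bb \<alpha> n + 1))) * real (2 * bb \<alpha> n) powr (- c) else 1)
     \<in> softO (\<lambda>n. real n powr ((2 + c) * \<alpha> - c))"
proof -
  have ev2: "\<forall>\<^sub>F n in sequentially. 4 \<le> n \<and> real M1 \<le> real (2 * bb \<alpha> n)"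
    using eventually_conj[OF eventually_ge_at_top[of 4] bb_large[OF a(2), of "real M1"]] .
  show ?thesis unfolding softO_def
  proof (intro CollectI exI[of _ "4::real"] exI[of _ "0::nat"], rule eventually_mono[OF ev2])
    fix n assume h: "4 \<le> n \<and> real M1 \<le> real (2 * bb \<alpha> n)"
    define m where "m = 2 * bb \<alpha> n"
    define p where "p = n div bb \<alpha> n + 1"
    have np: "0 < real n" using h by simp
    have x0: "0 < real n powr (1 - \<alpha>)" using np by simp
    have ml: "real n powr (1 - \<alpha>) \<le> real m" using bb_lower[of n \<alpha>] m_def by simp
    have pu: "real p \<le> 2 * real n powr \<alpha>" using pp_upper[OF a, of n] h p_def by simp
    have "real (length (prs p)) \<le> real (p * p)" using length_prs[of p] by linarith
    also have "\<dots> = real p * real p" by simp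
    also have "\<dots> \<le> (2 * real n powr \<alpha>) * (2 * real n powr \<alpha>)" using pu by (intro mult_mono) auto
    also have "\<dots> = 4 * real n powr (2 * \<alpha>)" by (simp add: powr_add[symmetric])
    finally have N: "real (length (prs p)) \<le> 4 * real n powr (2 * \<alpha>)" .
    have P: "real m powr (- c) \<le> (real n powr (1 - \<alpha>)) powr (- c)"
      using ml x0 c by (intro powr_mono2') auto
    have "real (length (prs p)) * real m powr (- c) \<le> 4 * real n powr (2 * \<alpha>) * (real n powr (1 - \<alpha>)) powr (- c)"
      using N P by (intro mult_mono) auto
    also have "\<dots> = 4 * real n powr ((2 + c) * \<alpha> - c)"
      by (simp add: powr_powr powr_add[symmetric] algebra_simps)
    finally have "real (length (prs p)) * real m powr (- c) \<le> 4 * real n powr ((2 + c) * \<alpha> - c)" .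
    then show "\<bar>if M1 \<le> 2 * bb \<alpha> n then real (length (prs (n div bb \<alpha> n + 1))) * real (2 * bb \<alpha> n) powr - c else 1\<bar>
         \<le> 4 * real n powr ((2 + c) * \<alpha> - c) * ln (real n) ^ 0"
      using h unfolding m_def p_def by simp
  qed
qed

lemma softO_s:
  assumes a: "0 < \<alpha>" "\<alpha> < 1" and s: "s \<in> softO (\<lambda>n. real n)"
  shows "(\<lambda>n. real (length (prs (n div bb \<alpha> n + 1))) * (2 * max 0 (s (2 * bb \<alpha> n)) + 1))
     \<in> softO (\<lambda>n. real n powr (1 + \<alpha>))"
proof -
  obtain C k where ev: "\<forall>\<^sub>F m in sequentially. \<bar>s m\<bar> \<le> C * real m * ln (real m) ^ k"
    using s unfolding softO_def by auto
  then obtain M0 where M0: "\<And>m. M0 \<le> m \<Longrightarrow> \<bar>s m\<bar> \<le> C * real m * ln (real m) ^ k"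
    unfolding eventually_sequentially by auto
  have ev2: "\<forall>\<^sub>F n in sequentially. 4 \<le> n \<and> real M0 \<le> real (2 * bb \<alpha> n)"
    using eventually_conj[OF eventually_ge_at_top[of 4] bb_large[OF a(2), of "real M0"]] .
  show ?thesis unfolding softO_def
  proof (intro CollectI exI[of _ "32 * \<bar>C\<bar> * 2 ^ k + 4"] exI[of _ k], rule eventually_mono[OF ev2])
    fix n assume h: "4 \<le> n \<and> real M0 \<le> real (2 * bb \<alpha> n)"
    define m where "m = 2 * bb \<alpha> n"
    define p where "p = n div bb \<alpha> n + 1"
    have mM: "M0 \<le> m" using h m_def by simp
    have np: "0 < real n" using h by simp
    have L: "0 \<le> ln (real m)" "ln (real m) \<le> 2 * ln (real n)" using ln_bb[OF a, of n] h m_def by auto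
    have mu: "real m \<le> 4 * real n powr (1 - \<alpha>)" using bb_upper[OF a(2), of n] h m_def by simp
    have ln1: "1 \<le> ln (real n)"
    proof -
      have "exp 1 \<le> real n" using exp_le h by linarith
      then show ?thesis using np by (metis ln_exp ln_le_cancel_iff exp_gt_zero le_less_trans not_le less_le_trans)
    qed
    have lk: "1 \<le> ln (real n) ^ k" using ln1 by (simp add: one_le_power)
    have pu: "real p \<le> 2 * real n powr \<alpha>" using pp_upper[OF a, of n] h p_def by simp
    have "real (length (prs p)) \<le> real (p * p)" using length_prs[of p] by linarith
    also have "\<dots> = real p * real p" by simp
    also have "\<dots> \<le> (2 * real n powr \<alpha>) * (2 * real n powr \<alpha>)" using pu by (intro mult_mono) auto
    also have "\<dots> = 4 * real n powr (2 * \<alpha>)" by (simp add: powr_add[symmetric])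
    finally have N: "real (length (prs p)) \<le> 4 * real n powr (2 * \<alpha>)" .
    have "max 0 (s m) \<le> \<bar>C\<bar> * (real m * ln (real m) ^ k)"
      using M0[OF mM] L(1) by (simp add: mult.assoc abs_mult_pos mult_right_mono) (smt (verit, best) mult_right_mono zero_le_mult_iff zero_le_power)
    also have "\<dots> \<le> \<bar>C\<bar> * ((4 * real n powr (1 - \<alpha>)) * (2 * ln (real n)) ^ k)"
      using L mu by (intro mult_left_mono mult_mono power_mono) auto
    finally have S: "max 0 (s m) \<le> 4 * 2 ^ k * \<bar>C\<bar> * (real n powr (1 - \<alpha>) * ln (real n) ^ k)"
      by (simp add: power_mult_distrib algebra_simps)
    have e1: "real n powr (2 * \<alpha>) * real n powr (1 - \<alpha>) = real n powr (1 + \<alpha>)"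
      by (simp add: powr_add[symmetric] add.commute)
    have e2: "real n powr (2 * \<alpha>) \<le> real n powr (1 + \<alpha>)" using a h by (intro powr_mono) auto
    have "real (length (prs p)) * (2 * max 0 (s m) + 1) \<le> 4 * real n powr (2 * \<alpha>) * (2 * (4 * 2 ^ k * \<bar>C\<bar> * (real n powr (1 - \<alpha>) * ln (real n) ^ k)) + 1)"
      using N S by (intro mult_mono) (auto simp: ac_simps)
    also have "\<dots> = 32 * 2 ^ k * \<bar>C\<bar> * (real n powr (2 * \<alpha>) * real n powr (1 - \<alpha>)) * ln (real n) ^ k + 4 * real n powr (2 * \<alpha>)"
      by (simp add: algebra_simps)
    also have "\<dots> \<le> 32 * 2 ^ k * \<bar>C\<bar> * real n powr (1 + \<alpha>) * ln (real n) ^ k + 4 * real n powr (1 + \<alpha>) * ln (real n) ^ k"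
    proof -
      have "4 * real n powr (2 * \<alpha>) \<le> 4 * real n powr (1 + \<alpha>) * 1" using e2 by simp
      also have "\<dots> \<le> 4 * real n powr (1 + \<alpha>) * ln (real n) ^ k" using lk by (intro mult_left_mono) auto
      finally show ?thesis unfolding e1 by simp
    qed
    also have "\<dots> = (32 * \<bar>C\<bar> * 2 ^ k + 4) * real n powr (1 + \<alpha>) * ln (real n) ^ k"
      by (simp add: algebra_simps)
    finally have fin: "real (length (prs p)) * (2 * max 0 (s m) + 1) \<le> (32 * \<bar>C\<bar> * 2 ^ k + 4) * real n powr (1 + \<alpha>) * ln (real n) ^ k" .
    have "0 \<le> real (length (prs p)) * (2 * max 0 (s m) + 1)" by simp
    then show "\<bar>real (length (prs (n div bb \<alpha> n + 1))) * (2 * max 0 (s (2 * bb \<alpha> n)) + 1)\<bar>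
         \<le> (32 * \<bar>C\<bar> * 2 ^ k + 4) * real n powr (1 + \<alpha>) * ln (real n) ^ k"
      using fin unfolding m_def p_def by linarith
  qed
qed



lemma prs_le: "k \<in> set (prs p) \<Longrightarrow> fst k \<le> snd k"
  by (auto simp: prs_def)

lemma inj_fv: "0 < b \<Longrightarrow> fst k \<le> snd k \<Longrightarrow> inj_on (fv b k) (Wv b k)"
  unfolding inj_on_def by (metis fv_mono linorder_neqE_nat less_irrefl)

theorem theorem4p7:
  fixes Alg :: rand_alg and \<beta> c :: real
  assumes "0 < \<beta>" and "\<beta> < 1" and "0 < c"
    and "\<exists>s t. s \<in> softO (\<lambda>n. real n) \<and> t \<in> softO (\<lambda>n. real n powr \<beta>) \<and>
           (\<forall>n. space_le Alg n (s n)) \<and>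
           (\<forall>\<^sub>F n in sequentially. \<forall>\<sigma>. valid_stream n \<sigma> \<longrightarrow>
               fail_prob Alg n (t n) \<sigma> \<le> real n powr (- c))"
  shows "\<forall>\<alpha>::real. 0 < \<alpha> \<and> \<alpha> < 1 \<longrightarrow>
    (\<exists>Alg' :: rand_alg. \<exists>s t \<delta>.
       s \<in> softO (\<lambda>n. real n powr (1 + \<alpha>)) \<and>
       t \<in> softO (\<lambda>n. real n powr (\<beta> * (1 - \<alpha>))) \<and>
       \<delta> \<in> softO (\<lambda>n. real n powr ((2 + c) * \<alpha> - c)) \<and>
       (\<forall>n. space_le Alg' n (s n)) \<and>
       (\<forall>n \<sigma>. valid_stream n \<sigma> \<longrightarrow> fail_prob Alg' n (t n) \<sigma> \<le> \<delta> n))"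
proof (intro allI impI)
  fix \<alpha> :: real assume \<alpha>: "0 < \<alpha> \<and> \<alpha> < 1"
  then have a1: "0 < \<alpha>" and a2: "\<alpha> < 1" by auto
  obtain s t where s: "s \<in> softO (\<lambda>n. real n)" and t: "t \<in> softO (\<lambda>n. real n powr \<beta>)"
    and sp: "\<forall>n. space_le Alg n (s n)"
    and fe: "\<forall>\<^sub>F n in sequentially. \<forall>\<sigma>. valid_stream n \<sigma> \<longrightarrow> fail_prob Alg n (t n) \<sigma> \<le> real n powr (- c)"
    using assms(4) by blast
  obtain M1 where M1: "\<And>m \<sigma>. M1 \<le> m \<Longrightarrow> valid_stream m \<sigma> \<Longrightarrow> fail_prob Alg m (t m) \<sigma> \<le> real m powr (- c)"
    using fe unfolding eventually_sequentially by blast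
  define B where "B n = bb \<alpha> n" for n
  define P where "P n = prs (n div B n + 1)" for n
  define Alg' :: rand_alg where "Alg' n = map_pmf (comb (Wv (B n)) (fv (B n)) (gv (B n)) (P n)) (Alg (2 * B n))" for n
  define s' where "s' n = real (length (P n)) * (2 * max 0 (s (2 * B n)) + 1)" for n
  define t' where "t' n = t (2 * B n)" for n
  define \<delta> where "\<delta> n = (if M1 \<le> 2 * B n then real (length (P n)) * real (2 * B n) powr (- c) else 1)" for n
  have Bpos: "0 < B n" for n unfolding B_def by (rule bb_pos)
  have mono: "\<And>u v. u \<in> Wv (B n) k \<Longrightarrow> v \<in> Wv (B n) k \<Longrightarrow> u < v \<Longrightarrow> fv (B n) k u < fv (B n) k v"
    if "k \<in> set (P n)" for n k
    using fv_mono[OF Bpos prs_le] that unfolding P_def by blast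
  have rng: "\<And>u. u \<in> Wv (B n) k \<Longrightarrow> fv (B n) k u < 2 * B n" for n k
    using fv_rng[OF Bpos] by blast
  have space: "space_le Alg' n (s' n)" for n
    unfolding space_le_def
  proof (intro ballI allI impI)
    fix D \<sigma> assume D: "D \<in> set_pmf (Alg' n)" and v: "valid_stream n \<sigma>"
    obtain D0 where D0: "D0 \<in> set_pmf (Alg (2 * B n))" "D = comb (Wv (B n)) (fv (B n)) (gv (B n)) (P n) D0"
      using D unfolding Alg'_def by auto
    have "real (length (run D0 (sub (Wv (B n) k) (fv (B n) k) \<sigma>))) \<le> max 0 (s (2 * B n))" if k: "k \<in> set (P n)" for k
    proof -
      have "valid_stream (2 * B n) (sub (Wv (B n) k) (fv (B n) k) \<sigma>)"
        by (rule valid_stream_sub[OF mono[OF k] rng v])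
      then show ?thesis using sp D0(1) unfolding space_le_def by fastforce
    qed
    then show "real (length (run D \<sigma>)) \<le> s' n"
      unfolding D0(2) length_run_comb s'_def by (intro sum_list_bound) auto
  qed
  have fail: "fail_prob Alg' n (t' n) \<sigma> \<le> \<delta> n" if v: "valid_stream n \<sigma>" for n \<sigma>
  proof -
    define b where "b = B n"
    define m where "m = 2 * b"
    define G where "G = final_graph \<sigma>"
    define bad where "bad D0 = (\<not> is_spanner n G (out_fn (comb (Wv b) (fv b) (gv b) (P n) D0) (run (comb (Wv b) (fv b) (gv b) (P n) D0) \<sigma>)) (t m))" for D0
    define badk where "badk k D0 = (\<not> is_spanner m (final_graph (sub (Wv b k) (fv b k) \<sigma>)) (out_fn D0 (run D0 (sub (Wv b k) (fv b k) \<sigma>))) (t m))" for k D0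
    have eq: "fail_prob Alg' n (t' n) \<sigma> = measure_pmf.prob (Alg m) {D0. bad D0}"
      unfolding fail_prob_def Alg'_def bad_def t'_def m_def b_def G_def by (simp add: vimage_def)
    show ?thesis
    proof (cases "M1 \<le> m")
      case False
      then have "\<delta> n = 1" unfolding \<delta>_def m_def b_def by simp
      then show ?thesis using eq by simp
    next
      case True
      have sub: "{D0. bad D0} \<subseteq> (\<Union>k\<in>set (P n). {D0. badk k D0})"
      proof
        fix D0 assume "D0 \<in> {D0. bad D0}"
        then have bd: "bad D0" by simp
        show "D0 \<in> (\<Union>k\<in>set (P n). {D0. badk k D0})"
        proof (rule ccontr)
          assume "D0 \<notin> (\<Union>k\<in>set (P n). {D0. badk k D0})"
          then have good: "\<And>k. k \<in> set (P n) \<Longrightarrow> \<not> badk k D0" by auto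
          have "is_spanner n G (\<Union>k\<in>set (P n). map_prod (gv b k) (gv b k) ` out_fn D0 (run D0 (sub (Wv b k) (fv b k) \<sigma>))) (t m)"
          proof (rule union_spanner)
            show "\<And>k u v. k \<in> set (P n) \<Longrightarrow> u \<in> Wv b k \<Longrightarrow> v \<in> Wv b k \<Longrightarrow> u < v \<Longrightarrow> fv b k u < fv b k v"
              using mono unfolding b_def by blast
            show "\<And>k u. k \<in> set (P n) \<Longrightarrow> u \<in> Wv b k \<Longrightarrow> fv b k u < m"
              using rng unfolding m_def b_def by blast
            show "\<And>k u. k \<in> set (P n) \<Longrightarrow> u \<in> Wv b k \<Longrightarrow> gv b k (fv b k u) = u"
              using gv_fv[OF Bpos] unfolding b_def by blast
            show "G \<subseteq> edges n" unfolding G_def by (rule final_graph_edges[OF v])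
            then show "\<exists>k\<in>set (P n). u \<in> Wv b k \<and> w \<in> Wv b k" if uw: "(u, w) \<in> G" for u w
              unfolding P_def b_def using prs_cover[where b="B n" and u=u and v=w and n=n and p="n div B n + 1"] Bpos[of n] uw by auto
            show "is_spanner m (map_prod (fv b k) (fv b k) ` (G \<inter> Wv b k \<times> Wv b k))
                    (out_fn D0 (run D0 (sub (Wv b k) (fv b k) \<sigma>))) (t m)" if k: "k \<in> set (P n)" for k
            proof -
              have "inj_on (fv b k) (Wv b k)" using inj_fv[OF Bpos prs_le] k unfolding P_def b_def by blast
              then show ?thesis using good[OF k] unfolding badk_def G_def by (simp add: final_graph_sub)
            qed
          qed
          then show False using bd unfolding bad_def by (simp add: out_comb)
        qed
      qed
      have "measure_pmf.prob (Alg m) {D0. bad D0} \<le> measure_pmf.prob (Alg m) (\<Union>k\<in>set (P n). {D0. badk k D0})"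
        using sub by (intro measure_pmf.finite_measure_mono) auto
      also have "\<dots> \<le> (\<Sum>k\<in>set (P n). measure_pmf.prob (Alg m) {D0. badk k D0})"
        by (intro measure_pmf.finite_measure_subadditive_finite) auto
      also have "\<dots> \<le> (\<Sum>k\<in>set (P n). real m powr (- c))"
      proof (intro sum_mono)
        fix k assume k: "k \<in> set (P n)"
        have "valid_stream m (sub (Wv b k) (fv b k) \<sigma>)"
          using valid_stream_sub[OF mono[OF k] rng v] unfolding m_def b_def .
        then have "fail_prob Alg m (t m) (sub (Wv b k) (fv b k) \<sigma>) \<le> real m powr (- c)" using M1 True by blast
        then show "measure_pmf.prob (Alg m) {D0. badk k D0} \<le> real m powr (- c)"
          unfolding fail_prob_def badk_def by simp
      qed
      also have "\<dots> = real (card (set (P n))) * real m powr (- c)" by simp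
      also have "\<dots> \<le> real (length (P n)) * real m powr (- c)"
        by (intro mult_right_mono) (auto simp: card_length)
      also have "\<dots> = \<delta> n" using True unfolding \<delta>_def m_def b_def by simp
      finally show ?thesis using eq by simp
    qed
  qed
  show "\<exists>Alg' :: rand_alg. \<exists>s t \<delta>.
       s \<in> softO (\<lambda>n. real n powr (1 + \<alpha>)) \<and>
       t \<in> softO (\<lambda>n. real n powr (\<beta> * (1 - \<alpha>))) \<and>
       \<delta> \<in> softO (\<lambda>n. real n powr ((2 + c) * \<alpha> - c)) \<and>
       (\<forall>n. space_le Alg' n (s n)) \<and>
       (\<forall>n \<sigma>. valid_stream n \<sigma> \<longrightarrow> fail_prob Alg' n (t n) \<sigma> \<le> \<delta> n)"
  proof (intro exI conjI allI impI)
    show "s' \<in> softO (\<lambda>n. real n powr (1 + \<alpha>))"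
      unfolding s'_def P_def B_def by (rule softO_s[OF a1 a2 s])
    show "t' \<in> softO (\<lambda>n. real n powr (\<beta> * (1 - \<alpha>)))"
      unfolding t'_def B_def by (rule softO_t[OF a1 a2 assms(1) t])
    show "\<delta> \<in> softO (\<lambda>n. real n powr ((2 + c) * \<alpha> - c))"
      unfolding \<delta>_def P_def B_def by (rule softO_delta[OF a1 a2 assms(3)])
    show "space_le Alg' n (s' n)" for n by (rule space)
    show "fail_prob Alg' n (t' n) \<sigma> \<le> \<delta> n" if "valid_stream n \<sigma>" for n \<sigma> using fail that by blast
  qed
qed

end
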